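(* Let $v$ be the linear classifier on $[0,1]^n$ defined by $\vec w\in\mathbb{R}^n$ and $q\in\mathbb{R}$, and let $i\ne j$. If $w_i\ge w_j>0$, then $\chi_i(\vec w;q)\ge\chi_j(\vec w;q)$.
   Context: The linear classifier defined by $\vec w$ and $q$ is $v:[0,1]^n\to\{0,1\}$, $v(\vec x)=1$ iff $\vec x\cdot\vec w\ge q$. For $\vec x\in[0,1]^n$, $b\in[0,1]$, $(\vec x_{-i},b)$ is $\vec x$ with $i$-th coordinate replaced by $b$. $\chi_i(\vec w;q)=\int_0^1\int_{[0,1]^n}|v(\vec x_{-i},b)-v(\vec x)|\,d\vec x\,db$. *)

theory Defs
  imports "HOL-Analysis.Analysis"
begin

definition lin_classifier :: "real ^ 'n \<Rightarrow> real \<Rightarrow> real ^ 'n \<Rightarrow> real" where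
  "lin_classifier w q x = (if x \<bullet> w \<ge> q then 1 else 0)"

definition repl_coord :: "real ^ 'n \<Rightarrow> 'n \<Rightarrow> real \<Rightarrow> real ^ 'n" where
  "repl_coord x i b = (\<chi> k. if k = i then b else x $ k)"

definition chi_infl :: "'n \<Rightarrow> real ^ 'n \<Rightarrow> real \<Rightarrow> real" where
  "chi_infl i w q = integral {0..1} (\<lambda>b. integral (cbox 0 1)
      (\<lambda>x. \<bar>lin_classifier w q (repl_coord x i b) - lin_classifier w q x\<bar>))"

end

theory Submission
  imports Defs
begin


lemma lborel_perm_invariant:
  fixes T :: "'a::euclidean_space \<Rightarrow> 'a"
  assumes lin: "linear T" and inv: "\<And>x. T (T x) = x"
    and B: "\<And>b. b \<in> Basis \<Longrightarrow> T b \<in> Basis"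
    and adj: "\<And>x b. b \<in> Basis \<Longrightarrow> T x \<bullet> b = x \<bullet> T b"
  shows "distr lborel borel T = lborel"
proof (rule lborel_eqI[symmetric])
  show "sets (distr lborel borel T) = sets borel" by simp
  fix l u :: 'a assume le: "\<And>b. b\<in>Basis \<Longrightarrow> l\<bullet>b \<le> u\<bullet>b"
  have meas: "T \<in> borel_measurable borel"
    by (intro borel_measurable_continuous_onI linear_continuous_on) (simp add: lin linear_conv_bounded_linear[symmetric])
  have pre: "T -` box l u = box (T l) (T u)"
  proof (intro set_eqI iffI)
    fix x assume x: "x \<in> T -` box l u"
    have H: "\<forall>b\<in>Basis. l \<bullet> b < T x \<bullet> b \<and> T x \<bullet> b < u \<bullet> b" using x by (simp add: mem_box)
    have "\<forall>b\<in>Basis. T l \<bullet> b < x \<bullet> b \<and> x \<bullet> b < T u \<bullet> b"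
    proof
      fix b :: 'a assume b: "b \<in> Basis"
      have Tb: "T b \<in> Basis" using B b .
      then have "l \<bullet> T b < T x \<bullet> T b \<and> T x \<bullet> T b < u \<bullet> T b" using H by blast
      then show "T l \<bullet> b < x \<bullet> b \<and> x \<bullet> b < T u \<bullet> b"
        using adj[OF b, of l] adj[OF b, of u] adj[OF Tb, of x] inv by auto
    qed
    then show "x \<in> box (T l) (T u)" by (simp add: mem_box)
  next
    fix x assume x: "x \<in> box (T l) (T u)"
    have H: "\<forall>b\<in>Basis. T l \<bullet> b < x \<bullet> b \<and> x \<bullet> b < T u \<bullet> b" using x by (simp add: mem_box)
    have "\<forall>b\<in>Basis. l \<bullet> b < T x \<bullet> b \<and> T x \<bullet> b < u \<bullet> b"
    proof
      fix b :: 'a assume b: "b \<in> Basis"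
      have Tb: "T b \<in> Basis" using B b .
      then have "T l \<bullet> T b < x \<bullet> T b \<and> x \<bullet> T b < T u \<bullet> T b" using H by blast
      then show "l \<bullet> b < T x \<bullet> b \<and> T x \<bullet> b < u \<bullet> b"
        using adj[OF Tb, of l] adj[OF Tb, of u] adj[OF b, of x] inv by auto
    qed
    then show "x \<in> T -` box l u" by (simp add: mem_box)
  qed
  have le2: "\<And>b. b\<in>Basis \<Longrightarrow> T l \<bullet> b \<le> T u \<bullet> b"
    using adj le B by simp
  have bij: "bij_betw T Basis Basis"
    by (rule bij_betwI[where g=T]) (auto simp: B inv)
  have "emeasure (distr lborel borel T) (box l u) = emeasure lborel (box (T l) (T u))"
    using meas by (simp add: emeasure_distr pre)
  also have "\<dots> = (\<Prod>b\<in>Basis. (T u - T l) \<bullet> b)" using le2 by simp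
  also have "\<dots> = (\<Prod>b\<in>Basis. (u - l) \<bullet> T b)"
    by (intro arg_cong[where f=ennreal] prod.cong refl) (simp add: inner_diff_left adj)
  also have "\<dots> = (\<Prod>b\<in>Basis. (u - l) \<bullet> b)"
    using prod.reindex_bij_betw[OF bij, of "\<lambda>b. (u - l) \<bullet> b"] by simp
  finally show "emeasure (distr lborel borel T) (box l u) = ennreal (\<Prod>b\<in>Basis. (u - l) \<bullet> b)" .
qed

definition sig :: "'n \<Rightarrow> real \<times> (real^'n) \<Rightarrow> real \<times> (real^'n)" where
  "sig k p = (snd p $ k, \<chi> l. if l = k then fst p else snd p $ l)"

definition swp :: "'n \<Rightarrow> 'n \<Rightarrow> real \<times> (real^'n) \<Rightarrow> real \<times> (real^'n)" where
  "swp i j p = (fst p, \<chi> l. if l = i then snd p $ j else if l = j then snd p $ i else snd p $ l)"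

lemma Basis_cases:
  assumes "(b :: real \<times> (real^'n)) \<in> Basis"
  obtains "b = (1, 0)" | m where "b = (0, axis m 1)"
  using assms by (auto simp: Basis_prod_def Basis_vec_def)

lemma axis_in_Basis': "(0::real, axis m (1::real)) \<in> (Basis :: (real \<times> (real^'n)) set)"
  by (auto simp: Basis_prod_def Basis_vec_def)

lemma one_in_Basis': "(1::real, 0::real^'n) \<in> (Basis :: (real \<times> (real^'n)) set)"
  by (auto simp: Basis_prod_def)

lemma sig_basis:
  "sig k (1, 0) = (0, axis k 1)"
  "sig k (0, axis m 1) = (if m = k then (1, 0) else (0, axis m 1))"
  by (auto simp: sig_def vec_eq_iff axis_def)

lemma swp_basis:
  "swp i j (1, 0) = (1, 0)"
  "swp i j (0, axis m 1) = (0, axis (if m = i then j else if m = j then i else m) 1)"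
  by (auto simp: swp_def vec_eq_iff axis_def)

lemma sig_lborel: "distr lborel borel (sig k) = lborel"
proof (rule lborel_perm_invariant)
  show "linear (sig k)"
    by (rule linearI) (auto simp: sig_def vec_eq_iff prod_eq_iff)
  show "sig k (sig k x) = x" for x
    by (auto simp: sig_def vec_eq_iff prod_eq_iff)
  show "sig k b \<in> Basis" if "b \<in> Basis" for b
    using that by (cases rule: Basis_cases) (auto simp: sig_basis axis_in_Basis' one_in_Basis')
  show "sig k x \<bullet> b = x \<bullet> sig k b" if "b \<in> Basis" for x b
    using that
  proof (cases rule: Basis_cases)
    case 1 then show ?thesis by (simp only: sig_basis) (auto simp: inner_prod_def inner_axis sig_def)
  next
    case (2 m) then show ?thesis by (simp only: sig_basis) (auto simp: inner_prod_def inner_axis sig_def)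
  qed
qed

lemma swp_lborel: "distr lborel borel (swp i j) = lborel"
proof (rule lborel_perm_invariant)
  show "linear (swp i j)"
    by (rule linearI) (auto simp: swp_def vec_eq_iff prod_eq_iff)
  show "swp i j (swp i j x) = x" for x
    by (auto simp: swp_def vec_eq_iff prod_eq_iff)
  show "swp i j b \<in> Basis" if "b \<in> Basis" for b
    using that by (cases rule: Basis_cases) (auto simp: swp_basis axis_in_Basis' one_in_Basis')
  show "swp i j x \<bullet> b = x \<bullet> swp i j b" if "b \<in> Basis" for x b
    using that
  proof (cases rule: Basis_cases)
    case 1 then show ?thesis by (simp only: swp_basis) (auto simp: inner_prod_def inner_axis swp_def)
  next
    case (2 m) then show ?thesis by (simp only: swp_basis) (auto simp: inner_prod_def inner_axis swp_def)
  qed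
qed

lemma comb:
  fixes U :: "real \<Rightarrow> real \<Rightarrow> real"
  assumes mono: "\<And>s s' t t'. s \<le> s' \<Longrightarrow> t \<le> t' \<Longrightarrow> U s t \<le> U s' t'"
    and sw: "\<And>s t. t \<le> s \<Longrightarrow> U t s \<le> U s t"
  shows "(of_bool ((U a b \<ge> r) \<noteq> (U a c \<ge> r)) + of_bool ((U c b \<ge> r) \<noteq> (U c a \<ge> r))
       + of_bool ((U b a \<ge> r) \<noteq> (U b c \<ge> r)) :: real) \<le>
     of_bool ((U b c \<ge> r) \<noteq> (U a c \<ge> r)) + of_bool ((U b a \<ge> r) \<noteq> (U c a \<ge> r))
       + of_bool ((U c b \<ge> r) \<noteq> (U a b \<ge> r))"
proof -
  have m: "\<And>s s' t t'. s \<le> s' \<Longrightarrow> t \<le> t' \<Longrightarrow> U s t \<ge> r \<Longrightarrow> U s' t' \<ge> r"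
    using mono order_trans by blast
  have w: "\<And>s t. t \<le> s \<Longrightarrow> U t s \<ge> r \<Longrightarrow> U s t \<ge> r"
    using sw order_trans by blast
  have key: "\<And>x y z. x \<le> y \<Longrightarrow> y \<le> z \<Longrightarrow>
     (U x y \<ge> r \<longrightarrow> U x z \<ge> r) \<and> (U x y \<ge> r \<longrightarrow> U y x \<ge> r) \<and> (U x y \<ge> r \<longrightarrow> U z y \<ge> r)
   \<and> (U x z \<ge> r \<longrightarrow> U y z \<ge> r) \<and> (U x z \<ge> r \<longrightarrow> U z x \<ge> r) \<and> (U y x \<ge> r \<longrightarrow> U z x \<ge> r)
   \<and> (U y x \<ge> r \<longrightarrow> U y z \<ge> r) \<and> (U y z \<ge> r \<longrightarrow> U z y \<ge> r) \<and> (U z x \<ge> r \<longrightarrow> U z y \<ge> r)"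
  subgoal premises p for x y z
  proof -
    have xz: "x \<le> z" using p by linarith
    note f = m[OF order_refl p(2)] m[OF xz order_refl] m[OF p(1) order_refl] m[OF p(2) order_refl]
      m[OF order_refl p(1)] m[OF order_refl xz] w[OF p(1)] w[OF xz] w[OF p(2)]
    show ?thesis using f by blast
  qed
  done
  define pab where "pab = (U a b \<ge> r)"
  define pac where "pac = (U a c \<ge> r)"
  define pba where "pba = (U b a \<ge> r)"
  define pbc where "pbc = (U b c \<ge> r)"
  define pca where "pca = (U c a \<ge> r)"
  define pcb where "pcb = (U c b \<ge> r)"
  note ds = pab_def[symmetric] pac_def[symmetric] pba_def[symmetric] pbc_def[symmetric] pca_def[symmetric] pcb_def[symmetric]
  consider "a \<le> b" "b \<le> c" | "a \<le> c" "c \<le> b" | "b \<le> a" "a \<le> c" | "b \<le> c" "c \<le> a"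
    | "c \<le> a" "a \<le> b" | "c \<le> b" "b \<le> a" by linarith
  then have G: "(of_bool (pab \<noteq> pac) + of_bool (pcb \<noteq> pca) + of_bool (pba \<noteq> pbc) :: real) \<le>
     of_bool (pbc \<noteq> pac) + of_bool (pba \<noteq> pca) + of_bool (pcb \<noteq> pab)"
  proof cases
    case 1 from key[of a b c, OF 1, unfolded ds] show ?thesis by (cases pab; cases pac; cases pba; cases pbc; cases pca; cases pcb; simp only: of_bool_eq; simp)
  next
    case 2 from key[of a c b, OF 2, unfolded ds] show ?thesis by (cases pab; cases pac; cases pba; cases pbc; cases pca; cases pcb; simp only: of_bool_eq; simp)
  next
    case 3 from key[of b a c, OF 3, unfolded ds] show ?thesis by (cases pab; cases pac; cases pba; cases pbc; cases pca; cases pcb; simp only: of_bool_eq; simp)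
  next
    case 4 from key[of b c a, OF 4, unfolded ds] show ?thesis by (cases pab; cases pac; cases pba; cases pbc; cases pca; cases pcb; simp only: of_bool_eq; simp)
  next
    case 5 from key[of c a b, OF 5, unfolded ds] show ?thesis by (cases pab; cases pac; cases pba; cases pbc; cases pca; cases pcb; simp only: of_bool_eq; simp)
  next
    case 6 from key[of c b a, OF 6, unfolded ds] show ?thesis by (cases pab; cases pac; cases pba; cases pbc; cases pca; cases pcb; simp only: of_bool_eq; simp)
  qed
  then show ?thesis unfolding ds .
qed

definition Sset :: "real^'n \<Rightarrow> real \<Rightarrow> 'n \<Rightarrow> (real \<times> (real^'n)) set" where
  "Sset w q k = {p. fst p \<in> {0..1} \<and> snd p \<in> cbox 0 1 \<and>
      ((repl_coord (snd p) k (fst p) \<bullet> w \<ge> q) \<noteq> (snd p \<bullet> w \<ge> q))}"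

lemma inner_repl: fixes x w :: "real^'n" and k :: 'n shows "repl_coord x k b \<bullet> w = x \<bullet> w - x $ k * w $ k + b * w $ k"
proof -
  have U: "(UNIV :: 'n set) = insert k (UNIV - {k})" by auto
  have "repl_coord x k b \<bullet> w = (\<Sum>l\<in>UNIV. repl_coord x k b $ l * w $ l)"
    by (simp add: inner_vec_def)
  also have "\<dots> = b * w $ k + (\<Sum>l\<in>UNIV - {k}. x $ l * w $ l)"
    by (subst U, subst sum.insert) (auto simp: repl_coord_def intro!: sum.cong)
  also have "x \<bullet> w = x $ k * w $ k + (\<Sum>l\<in>UNIV - {k}. x $ l * w $ l)"
    by (simp add: inner_vec_def, subst U, subst sum.insert) auto
  ultimately show ?thesis by simp
qed

lemma Sset_borel: fixes w :: "real^'n" and k :: 'n shows "Sset w q k \<in> sets borel"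
proof -
  define f1 where "f1 = (\<lambda>p::real \<times> (real^'n). snd p \<bullet> w - snd p $ k * w $ k + fst p * w $ k)"
  define f2 where "f2 = (\<lambda>p::real \<times> (real^'n). snd p \<bullet> w)"
  have c1: "continuous_on UNIV f1" unfolding f1_def by (intro continuous_intros)
  have c2: "continuous_on UNIV f2" unfolding f2_def by (intro continuous_intros)
  have C1: "{p. q \<le> f1 p} \<in> sets borel"
    by (intro borel_closed closed_Collect_le continuous_intros c1[THEN continuous_on_subset]) auto
  have C2: "{p. q \<le> f2 p} \<in> sets borel"
    by (intro borel_closed closed_Collect_le continuous_intros c2[THEN continuous_on_subset]) auto
  have Bx: "({0..1::real} \<times> cbox 0 (1::real^'n)) \<in> sets borel"
    by (intro borel_closed closed_Times closed_cbox) auto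
  have "Sset w q k = ({0..1} \<times> cbox 0 1) \<inter> (({p. q \<le> f1 p} \<inter> - {p. q \<le> f2 p}) \<union> (- {p. q \<le> f1 p} \<inter> {p. q \<le> f2 p}))"
    by (auto simp: Sset_def f1_def f2_def inner_repl)
  then show ?thesis using C1 C2 Bx by (simp add: sets.Int sets.Un borel_comp)
qed

lemma Sset_sub: fixes w :: "real^'n" and k :: 'n shows "Sset w q k \<subseteq> {0..1} \<times> cbox 0 1"
  by (auto simp: Sset_def)

lemma Sset_fin: fixes w :: "real^'n" and k :: 'n shows "emeasure lborel (Sset w q k) < \<infinity>"
proof -
  have "bounded ({0..1::real} \<times> cbox 0 (1::real^'n))"
    by (intro compact_imp_bounded compact_Times compact_cbox compact_Icc)
  then show ?thesis using Sset_sub[of w q k] bounded_subset emeasure_bounded_finite by blast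
qed

lemma chi_eq_measure:
  fixes w :: "real^'n" and k :: 'n
  shows "chi_infl k w q = measure lborel (Sset w q k)"
proof -
  define S where "S = Sset w q k"
  have Sb: "S \<in> sets borel" unfolding S_def by (rule Sset_borel)
  have Sp: "S \<in> sets (lborel \<Otimes>\<^sub>M (lborel :: (real^'n) measure))"
    using Sb by (subst lborel_prod) simp
  define F where "F b = Pair b -` S" for b
  have Fb: "F b \<in> sets borel" for b
    using sets_Pair1[OF Sp] unfolding F_def by simp
  have Fsub: "F b \<subseteq> cbox 0 1" for b
    using Sset_sub[of w q k] unfolding F_def S_def by auto
  have Ffin: "emeasure lborel (F b) < \<infinity>" for b
    using Fsub[of b] bounded_subset[OF compact_imp_bounded[OF compact_cbox]] emeasure_bounded_finite
    by blast
  define h where "h b = measure lborel (F b)" for b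
  have inner: "integral (cbox 0 1) (\<lambda>x. \<bar>lin_classifier w q (repl_coord x k b) - lin_classifier w q x\<bar>) = h b"
    if b: "b \<in> {0..1}" for b
  proof -
    have "((\<lambda>x. 1) has_integral h b) (F b)"
      unfolding h_def by (rule has_integral_measure_lborel[OF Fb Ffin])
    then have "((\<lambda>x. if x \<in> F b then 1 else 0) has_integral h b) UNIV"
      by (simp add: has_integral_restrict_UNIV)
    moreover have "(\<lambda>x. if x \<in> F b then 1 else 0) =
       (\<lambda>x. if x \<in> cbox 0 1 then \<bar>lin_classifier w q (repl_coord x k b) - lin_classifier w q x\<bar> else 0)"
      using b by (auto simp: F_def S_def Sset_def lin_classifier_def fun_eq_iff)
    ultimately have "((\<lambda>x. \<bar>lin_classifier w q (repl_coord x k b) - lin_classifier w q x\<bar>) has_integral h b) (cbox 0 1)"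
      by (simp add: has_integral_restrict_UNIV)
    then show ?thesis by (rule integral_unique)
  qed
  have hm: "h \<in> borel_measurable borel"
  proof -
    have "(\<lambda>b. emeasure lborel (Pair b -` S)) \<in> borel_measurable (lborel :: real measure)"
      by (rule lborel.measurable_emeasure_Pair[OF Sp])
    then have "(\<lambda>b. enn2real (emeasure lborel (Pair b -` S))) \<in> borel_measurable (lborel :: real measure)"
      by measurable
    then show ?thesis unfolding h_def F_def measure_def by simp
  qed
  have "emeasure lborel S = emeasure (lborel \<Otimes>\<^sub>M lborel) S" by (simp add: lborel_prod)
  also have "\<dots> = (\<integral>\<^sup>+b. emeasure lborel (F b) \<partial>lborel)"
    unfolding F_def by (rule lborel.emeasure_pair_measure_alt[OF Sp])
  also have "\<dots> = (\<integral>\<^sup>+b. ennreal (h b) \<partial>lborel)"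
    unfolding h_def using Ffin by (intro nn_integral_cong) (simp add: emeasure_eq_ennreal_measure less_top)
  finally have X: "emeasure lborel S = (\<integral>\<^sup>+b. ennreal (h b) \<partial>lborel)" .
  have "emeasure lborel S = ennreal (measure lborel S)"
    using Sset_fin[of w q k] unfolding S_def by (intro emeasure_eq_ennreal_measure) auto
  with X have "(\<integral>\<^sup>+b. ennreal (h b) \<partial>lborel) = ennreal (measure lborel S)" by simp
  then have "(h has_integral measure lborel S) UNIV"
    by (intro nn_integral_has_integral hm) (auto simp: h_def)
  moreover have "(\<lambda>b. if b \<in> {0..1} then h b else 0) = h"
  proof -
    have "F b = {}" if "b \<notin> {0..1}" for b using Sset_sub[of w q k] that unfolding F_def S_def by auto
    then show ?thesis by (auto simp: fun_eq_iff h_def)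
  qed
  ultimately have "(h has_integral measure lborel S) {0..1}"
    using has_integral_restrict_UNIV[of "{0..1::real}" h] by simp
  then have "integral {0..1} h = measure lborel S" by (rule integral_unique)
  moreover have "integral {0..1} (\<lambda>b. integral (cbox 0 1) (\<lambda>x. \<bar>lin_classifier w q (repl_coord x k b) - lin_classifier w q x\<bar>))
     = integral {0..1} h"
    by (rule integral_cong) (rule inner)
  ultimately show ?thesis
    unfolding chi_infl_def S_def by simp
qed



lemma cube_iff: "y \<in> cbox 0 (1::real^'n) \<longleftrightarrow> (\<forall>l. 0 \<le> y $ l \<and> y $ l \<le> 1)"
  by (simp add: mem_box_cart)

lemma cube_sig:
  fixes x :: "real^'n" and k :: 'n
  shows "(x $ k \<in> {0..1} \<and> (\<chi> l. if l = k then b else x $ l) \<in> cbox 0 (1::real^'n)) \<longleftrightarrow> (b \<in> {0..1} \<and> x \<in> cbox 0 1)"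
  unfolding cube_iff
proof
  assume H: "x $ k \<in> {0..1} \<and> (\<forall>l. 0 \<le> (\<chi> l. if l = k then b else x $ l) $ l \<and> (\<chi> l. if l = k then b else x $ l) $ l \<le> 1)"
  show "b \<in> {0..1} \<and> (\<forall>l. 0 \<le> x $ l \<and> x $ l \<le> 1)"
  proof (intro conjI allI)
    show "b \<in> {0..1}" using H[THEN conjunct2, rule_format, of k] by simp
    fix l
    show "0 \<le> x $ l" "x $ l \<le> 1"
      using H[THEN conjunct2, rule_format, of l] H[THEN conjunct1] by (cases "l = k"; simp)+
  qed
next
  assume H: "b \<in> {0..1} \<and> (\<forall>l. 0 \<le> x $ l \<and> x $ l \<le> 1)"
  show "x $ k \<in> {0..1} \<and> (\<forall>l. 0 \<le> (\<chi> l. if l = k then b else x $ l) $ l \<and> (\<chi> l. if l = k then b else x $ l) $ l \<le> 1)"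
  proof (intro conjI allI)
    show "x $ k \<in> {0..1}" using H[THEN conjunct2, rule_format, of k] by simp
    fix l
    show "0 \<le> (\<chi> l. if l = k then b else x $ l) $ l" "(\<chi> l. if l = k then b else x $ l) $ l \<le> 1"
      using H[THEN conjunct2, rule_format, of l] H[THEN conjunct1] by (cases "l = k"; simp)+
  qed
qed

lemma cube_swp:
  fixes x :: "real^'n" and i j :: 'n
  shows "(\<chi> l. if l = i then x $ j else if l = j then x $ i else x $ l) \<in> cbox 0 (1::real^'n) \<longleftrightarrow> x \<in> cbox 0 1"
  unfolding cube_iff
proof
  assume H: "\<forall>l. 0 \<le> (\<chi> l. if l = i then x $ j else if l = j then x $ i else x $ l) $ l \<and> (\<chi> l. if l = i then x $ j else if l = j then x $ i else x $ l) $ l \<le> 1"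
  show "\<forall>l. 0 \<le> x $ l \<and> x $ l \<le> 1"
  proof
    fix l
    show "0 \<le> x $ l \<and> x $ l \<le> 1"
      using H[rule_format, of l] H[rule_format, of i] H[rule_format, of j]
      by (cases "l = i"; cases "l = j"; cases "i = j"; simp)
  qed
next
  assume H: "\<forall>l. 0 \<le> x $ l \<and> x $ l \<le> 1"
  show "\<forall>l. 0 \<le> (\<chi> l. if l = i then x $ j else if l = j then x $ i else x $ l) $ l \<and> (\<chi> l. if l = i then x $ j else if l = j then x $ i else x $ l) $ l \<le> 1"
    using H by simp
qed

lemma inner_two:
  fixes x y w :: "real^'n" and i j :: 'n
  assumes ij: "i \<noteq> j" and eq: "\<forall>l. l \<noteq> i \<longrightarrow> l \<noteq> j \<longrightarrow> y $ l = x $ l"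
  shows "y \<bullet> w = w $ i * y $ i + w $ j * y $ j + (x \<bullet> w - w $ i * x $ i - w $ j * x $ j)"
proof -
  have U: "(UNIV :: 'n set) = insert i (insert j (UNIV - {i, j}))" by auto
  have *: "z \<bullet> w = z $ i * w $ i + z $ j * w $ j + (\<Sum>l\<in>UNIV - {i, j}. z $ l * w $ l)" for z :: "real^'n"
    using ij by (simp add: inner_vec_def, subst U, subst sum.insert, simp, simp, subst sum.insert) auto
  have "(\<Sum>l\<in>UNIV - {i, j}. y $ l * w $ l) = (\<Sum>l\<in>UNIV - {i, j}. x $ l * w $ l)"
    using eq by (intro sum.cong) auto
  then show ?thesis using *[of y] *[of x] by (simp add: algebra_simps)
qed

lemma pointwise:
  fixes w :: "real^'n" and i j :: 'n
  assumes ij: "i \<noteq> j" and wij: "w $ j \<le> w $ i" and wj: "0 \<le> w $ j"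
  shows "indicator (Sset w q j) p + indicator (Sset w q j) (swp i j p) + indicator (Sset w q j) (sig i p)
     \<le> (indicator (Sset w q i) p + indicator (Sset w q i) (swp i j p) + indicator (Sset w q i) (sig j p) :: real)"
proof -
  obtain b x where p: "p = (b, x)" by (cases p)
  define R where "R = x \<bullet> w - w $ i * x $ i - w $ j * x $ j"
  define U where "U s t = w $ i * s + w $ j * t + R" for s t
  have key: "y \<bullet> w = U (y $ i) (y $ j)" if "\<forall>l. l \<noteq> i \<longrightarrow> l \<noteq> j \<longrightarrow> y $ l = x $ l" for y
    using inner_two[OF ij that, of w] unfolding U_def R_def by simp
  define a where "a = x $ i"
  define c where "c = x $ j"
  define B where "B = (b \<in> {0..1} \<and> x \<in> cbox 0 1)"
  have k1: "repl_coord x i b \<bullet> w = U b c" "x \<bullet> w = U a c" "repl_coord x j b \<bullet> w = U a b"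
    using ij key[of "repl_coord x i b"] key[of x] key[of "repl_coord x j b"]
    by (auto simp: a_def c_def repl_coord_def)
  have k2: "repl_coord (snd (swp i j p)) i b \<bullet> w = U b a" "snd (swp i j p) \<bullet> w = U c a"
    "repl_coord (snd (swp i j p)) j b \<bullet> w = U c b"
    using ij key[of "repl_coord (snd (swp i j p)) i b"] key[of "snd (swp i j p)"] key[of "repl_coord (snd (swp i j p)) j b"]
    by (auto simp: a_def c_def repl_coord_def swp_def p)
  have k3: "repl_coord (snd (sig j p)) i c \<bullet> w = U c b" "snd (sig j p) \<bullet> w = U a b"
    using ij key[of "repl_coord (snd (sig j p)) i c"] key[of "snd (sig j p)"]
    by (auto simp: a_def c_def repl_coord_def sig_def p)
  have k4: "repl_coord (snd (sig i p)) j a \<bullet> w = U b a" "snd (sig i p) \<bullet> w = U b c"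
    using ij key[of "repl_coord (snd (sig i p)) j a"] key[of "snd (sig i p)"]
    by (auto simp: a_def c_def repl_coord_def sig_def p)
  have f: "fst (swp i j p) = b" "fst (sig j p) = c" "fst (sig i p) = a"
    by (auto simp: swp_def sig_def p a_def c_def)
  have B1: "(fst (swp i j p) \<in> {0..1} \<and> snd (swp i j p) \<in> cbox 0 1) = B"
    unfolding B_def by (simp add: swp_def p cube_swp)
  have B2: "(fst (sig j p) \<in> {0..1} \<and> snd (sig j p) \<in> cbox 0 1) = B"
    unfolding B_def by (simp only: sig_def p fst_conv snd_conv cube_sig)
  have B3: "(fst (sig i p) \<in> {0..1} \<and> snd (sig i p) \<in> cbox 0 1) = B"
    unfolding B_def by (simp only: sig_def p fst_conv snd_conv cube_sig)
  have mono: "U s t \<le> U s' t'" if "s \<le> s'" "t \<le> t'" for s s' t t'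
  proof -
    have "w $ i * s \<le> w $ i * s'" using that wij wj by (intro mult_left_mono) auto
    moreover have "w $ j * t \<le> w $ j * t'" using that wj by (intro mult_left_mono) auto
    ultimately show ?thesis unfolding U_def by simp
  qed
  have sw: "U t s \<le> U s t" if "t \<le> s" for s t
  proof -
    have "0 \<le> (w $ i - w $ j) * (s - t)" using that wij by simp
    then show ?thesis unfolding U_def by (simp add: algebra_simps)
  qed
  have C: "(of_bool ((U a b \<ge> q) \<noteq> (U a c \<ge> q)) + of_bool ((U c b \<ge> q) \<noteq> (U c a \<ge> q))
       + of_bool ((U b a \<ge> q) \<noteq> (U b c \<ge> q)) :: real) \<le>
     of_bool ((U b c \<ge> q) \<noteq> (U a c \<ge> q)) + of_bool ((U b a \<ge> q) \<noteq> (U c a \<ge> q))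
       + of_bool ((U c b \<ge> q) \<noteq> (U a b \<ge> q))"
    by (rule comb[of U]) (auto intro: mono sw)
  show ?thesis
  proof (cases B)
    case False
    then show ?thesis using B1 B2 B3 unfolding Sset_def indicator_def
      by (auto simp: p B_def)
  next
    case True
    have "indicator (Sset w q j) p = (of_bool ((U a b \<ge> q) \<noteq> (U a c \<ge> q)) :: real)"
      using True k1 unfolding Sset_def B_def by (simp add: p indicator_def)
    moreover have "indicator (Sset w q j) (swp i j p) = (of_bool ((U c b \<ge> q) \<noteq> (U c a \<ge> q)) :: real)"
      using True B1 k2 f unfolding Sset_def by (simp add: indicator_def)
    moreover have "indicator (Sset w q j) (sig i p) = (of_bool ((U b a \<ge> q) \<noteq> (U b c \<ge> q)) :: real)"
      using True B3 k4 f unfolding Sset_def by (simp add: indicator_def)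
    moreover have "indicator (Sset w q i) p = (of_bool ((U b c \<ge> q) \<noteq> (U a c \<ge> q)) :: real)"
      using True k1 unfolding Sset_def B_def by (simp add: p indicator_def)
    moreover have "indicator (Sset w q i) (swp i j p) = (of_bool ((U b a \<ge> q) \<noteq> (U c a \<ge> q)) :: real)"
      using True B1 k2 f unfolding Sset_def by (simp add: indicator_def)
    moreover have "indicator (Sset w q i) (sig j p) = (of_bool ((U c b \<ge> q) \<noteq> (U a b \<ge> q)) :: real)"
      using True B2 k3 f unfolding Sset_def by (simp add: indicator_def)
    ultimately show ?thesis using C by simp
  qed
qed

lemma sig_meas: "sig k \<in> borel_measurable borel"
proof -
  have "linear (sig k)" by (rule linearI) (auto simp: sig_def vec_eq_iff prod_eq_iff)
  then show ?thesis
    by (intro borel_measurable_continuous_onI linear_continuous_on) (simp add: linear_conv_bounded_linear[symmetric])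
qed

lemma swp_meas: "swp i j \<in> borel_measurable borel"
proof -
  have "linear (swp i j)" by (rule linearI) (auto simp: swp_def vec_eq_iff prod_eq_iff)
  then show ?thesis
    by (intro borel_measurable_continuous_onI linear_continuous_on) (simp add: linear_conv_bounded_linear[symmetric])
qed

lemma nn_pres:
  fixes T :: "'a::euclidean_space \<Rightarrow> 'a"
  assumes A: "A \<in> sets borel" and D: "distr lborel borel T = lborel" and T: "T \<in> borel_measurable borel"
  shows "(\<integral>\<^sup>+p. indicator A (T p) \<partial>lborel) = emeasure lborel A"
proof -
  have "(\<integral>\<^sup>+p. indicator A (T p) \<partial>lborel) = (\<integral>\<^sup>+p. indicator A p \<partial>distr lborel borel T)"
    using T A by (subst nn_integral_distr) auto
  also have "\<dots> = emeasure lborel A" using A by (simp add: D)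
  finally show ?thesis .
qed

lemma sum3:
  fixes T1 T2 :: "'a::euclidean_space \<Rightarrow> 'a"
  assumes A: "A \<in> sets borel" and D1: "distr lborel borel T1 = lborel" and M1: "T1 \<in> borel_measurable borel"
    and D2: "distr lborel borel T2 = lborel" and M2: "T2 \<in> borel_measurable borel"
  shows "(\<integral>\<^sup>+p. ennreal (indicator A p + indicator A (T1 p) + indicator A (T2 p)) \<partial>lborel) = 3 * emeasure lborel A"
proof -
  have [measurable]: "T1 \<in> borel_measurable borel" "T2 \<in> borel_measurable borel" "A \<in> sets borel"
    using A M1 M2 by auto
  have "(\<integral>\<^sup>+p. ennreal (indicator A p + indicator A (T1 p) + indicator A (T2 p)) \<partial>lborel)
      = (\<integral>\<^sup>+p. (indicator A p + indicator A (T1 p) + indicator A (T2 p)) \<partial>lborel)"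
    by (intro nn_integral_cong) (simp add: ennreal_plus ennreal_indicator del: ennreal_plus_if)
  also have "\<dots> = (\<integral>\<^sup>+p. indicator A p \<partial>lborel) + (\<integral>\<^sup>+p. indicator A (T1 p) \<partial>lborel) + (\<integral>\<^sup>+p. indicator A (T2 p) \<partial>lborel)"
    by (simp add: nn_integral_add)
  also have "\<dots> = 3 * emeasure lborel A"
  proof -
    have e3: "e + e + e = 3 * e" for e :: ennreal
    proof -
      have "e + e + e = (1 + 1 + 1) * e" by (simp only: distrib_right mult_1_left)
      also have "(1 + 1 + 1 :: ennreal) = 3" by simp
      finally show ?thesis .
    qed
    show ?thesis using nn_pres[OF A D1 M1] nn_pres[OF A D2 M2] A by (simp add: e3)
  qed
  finally show ?thesis .
qed

theorem mainTheorem10: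
  fixes w :: "real ^ 'n" and q :: real and i j :: 'n
  assumes "i \<noteq> j" and "w $ i \<ge> w $ j" and "w $ j > 0"
  shows "chi_infl i w q \<ge> chi_infl j w q"
proof -
  let ?Si = "Sset w q i" and ?Sj = "Sset w q j"
  have "3 * emeasure lborel ?Sj = (\<integral>\<^sup>+p. ennreal (indicator ?Sj p + indicator ?Sj (swp i j p) + indicator ?Sj (sig i p)) \<partial>lborel)"
    by (rule sum3[symmetric]) (auto intro: Sset_borel swp_lborel sig_lborel swp_meas sig_meas)
  also have "\<dots> \<le> (\<integral>\<^sup>+p. ennreal (indicator ?Si p + indicator ?Si (swp i j p) + indicator ?Si (sig j p)) \<partial>lborel)"
    using assms by (intro nn_integral_mono ennreal_leI pointwise) auto
  also have "\<dots> = 3 * emeasure lborel ?Si"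
    by (rule sum3) (auto intro: Sset_borel swp_lborel sig_lborel swp_meas sig_meas)
  finally have le: "3 * emeasure lborel ?Sj \<le> 3 * emeasure lborel ?Si" .
  have ej: "emeasure lborel ?Sj = ennreal (measure lborel ?Sj)"
    using Sset_fin[of w q j] by (intro emeasure_eq_ennreal_measure) auto
  have ei: "emeasure lborel ?Si = ennreal (measure lborel ?Si)"
    using Sset_fin[of w q i] by (intro emeasure_eq_ennreal_measure) auto
  have "ennreal (3 * measure lborel ?Sj) \<le> ennreal (3 * measure lborel ?Si)"
    using le unfolding ej ei by (simp add: ennreal_mult')
  then have "3 * measure lborel ?Sj \<le> 3 * measure lborel ?Si"
    by (simp add: ennreal_le_iff measure_nonneg)
  then show ?thesis by (simp add: chi_eq_measure)
qed

end
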